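(* Consider a POMDP with finite state, action and observation sets $\mathcal{S},\mathcal{A},O$, known cost $C:\mathcal{S}\times\mathcal{A}\to[0,1]$, known observation kernel $\eta$, and unknown transition kernel $\theta_*\in\Theta\subseteq\Theta_H$ drawn from a prior $f$, and let $(\theta_k,t_k,T_k,K_T)$ be generated by the PSRL-POMDP algorithm run for $T$ steps. Then $$R_T\le H\,\mathbb{E}_{\theta_*}[K_T]+R_1+R_2+R_3,$$ where $$R_1:=\mathbb{E}_{\theta_*}\Big[\sum_{k=1}^{K_T}T_k\big(J(\theta_k)-J(\theta_* )\big)\Big],$$ $$R_2:=H\,\mathbb{E}_{\theta_*}\Big[\sum_{k=1}^{K_T}\sum_{t=t_k}^{t_{k+1}-1}\Big(\sum_{s'}\big|\theta_*(s'\mid s_t,a_t)-\theta_k(s'\mid s_t,a_t)\big|+\sum_s\big|h_t(s;\theta_* )-h_t(s;\theta_k)\big|\Big)\Big],$$ $$R_3:=\mathbb{E}_{\theta_*}\Big[\sum_{k=1}^{K_T}\sum_{t=t_k}^{t_{k+1}-1}\big(c(h_t(\cdot;\theta_* ),a_t)-c(h_t(\cdot;\theta_k),a_t)\big)\Big].$$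
   Context: Notation: $\Delta_{\mathcal{X}}$ is the set of distributions on $\mathcal{X}$; $c(b,a):=\sum_sC(s,a)b(s)$; $P(o\mid b,a;\theta):=\sum_{s',s}\eta(o\mid s')\theta(s'\mid s,a)b(s)$; $\tau(b,a,o;\theta)(s'):=\frac{\sum_s\eta(o\mid s')\theta(s'\mid s,a)b(s)}{\sum_{s'',s}\eta(o\mid s'')\theta(s''\mid s,a)b(s)}$. $\Theta_H$ is the set of transition kernels $\theta$ for which there exist $J(\theta)\in\mathbb{R}$ and a bounded $v(\cdot;\theta):\Delta_{\mathcal{S}}\to\mathbb{R}$ with $\inf_b v(b;\theta)=0$, $\sup_b v(b;\theta)\le H$, satisfying for all $b$: $J(\theta)+v(b;\theta)=\min_a\{c(b,a)+\sum_oP(o\mid b,a;\theta)v(\tau(b,a,o;\theta);\theta)\}$; $\pi^*(b;\theta)$ denotes a minimizer of the right-hand side. Dynamics: $s_1\sim h(\cdot;\theta_* )$, $o_t\sim\eta(\cdot\mid s_t)$, $s_{t+1}\sim\theta_*(\cdot\mid s_t,a_t)$, cost $C(s_t,a_t)$ (unobserved). $\mathcal{F}_t$ is the sigma-algebra generated by $a_1,o_1,\dots,a_{t-1},o_t$. For each $\theta\in\Theta$, $h_t(s;\theta)=\Pr(s_t=s\mid\mathcal{F}_t;\theta)$, computed by $h_1(s;\theta)\propto\eta(o_1\mid s)h(s;\theta)$ and $h_{t+1}(\cdot;\theta)=\tau(h_t(\cdot;\theta),a_t,o_{t+1};\theta)$; $f_t$ is the posterior of $\theta_*$ given $\mathcal{F}_t$.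 PSRL-POMDP proceeds in episodes $k=1,2,\dots$ starting at times $t_1=1<t_2<\cdots$ (stopping times determined by the observed history); at $t_k$ it samples $\theta_k\sim f_{t_k}$ and for $t_k\le t<t_{k+1}$ plays $a_t=\pi^*(h_t(\cdot;\theta_k);\theta_k)$. $K_T$ is the number of episodes started by time $T$, $t_k:=T+1$ for $k>K_T$, and $T_k:=t_{k+1}-t_k$. $\mathbb{E}_{\theta_*}[\cdot]:=\mathbb{E}[\cdot\mid\theta_*]$, and the regret is $R_T:=\mathbb{E}_{\theta_*}\big[\sum_{t=1}^T(C(s_t,a_t)-J(\theta_* ))\big]$. *)

theory Defs
  imports "HOL-Probability.Probability"
begin

text \<open>A transition kernel theta is encoded as theta s a s' = theta(s' | s, a);
  an observation kernel eta as eta s ob = eta(ob | s); a cost as C s a.\<close>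

type_synonym ('s, 'a) kern = "'s \<Rightarrow> 'a \<Rightarrow> 's \<Rightarrow> real"

text \<open>Histories F_t: first observation o_1 and the list of pairs (a_1,o_2),...,(a_(t-1),o_t).\<close>
type_synonym ('a, 'o) hist = "'o \<times> ('a \<times> 'o) list"

definition Dist :: "('s::finite \<Rightarrow> real) set" where
  "Dist = {b. (\<forall>s. 0 \<le> b s) \<and> sum b UNIV = 1}"

definition is_kernel :: "('s::finite, 'a) kern \<Rightarrow> bool" where
  "is_kernel \<theta> \<longleftrightarrow> (\<forall>s a. \<theta> s a \<in> Dist)"

definition cbar :: "('s::finite \<Rightarrow> 'a \<Rightarrow> real) \<Rightarrow> ('s \<Rightarrow> real) \<Rightarrow> 'a \<Rightarrow> real" where
  "cbar C b a = (\<Sum>s\<in>UNIV. C s a * b s)"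

definition Pobs :: "('s::finite \<Rightarrow> 'o \<Rightarrow> real) \<Rightarrow> ('s, 'a) kern \<Rightarrow> ('s \<Rightarrow> real) \<Rightarrow> 'a \<Rightarrow> 'o \<Rightarrow> real" where
  "Pobs \<eta> \<theta> b a ob = (\<Sum>s'\<in>UNIV. \<Sum>s\<in>UNIV. \<eta> s' ob * \<theta> s a s' * b s)"

text \<open>Belief update tau. When the normalising constant P(o|b,a;theta) is zero the
  paper's formula is undefined; we then keep the belief b (convention).\<close>
definition tau :: "('s::finite \<Rightarrow> 'o \<Rightarrow> real) \<Rightarrow> ('s, 'a) kern \<Rightarrow> ('s \<Rightarrow> real) \<Rightarrow> 'a \<Rightarrow> 'o \<Rightarrow> ('s \<Rightarrow> real)" where
  "tau \<eta> \<theta> b a ob =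
     (if Pobs \<eta> \<theta> b a ob = 0 then b
      else (\<lambda>s'. (\<Sum>s\<in>UNIV. \<eta> s' ob * \<theta> s a s' * b s) / Pobs \<eta> \<theta> b a ob))"

definition bellman_rhs ::
  "('s::finite \<Rightarrow> 'o::finite \<Rightarrow> real) \<Rightarrow> ('s \<Rightarrow> 'a \<Rightarrow> real) \<Rightarrow> ('s, 'a) kern
   \<Rightarrow> (('s \<Rightarrow> real) \<Rightarrow> real) \<Rightarrow> ('s \<Rightarrow> real) \<Rightarrow> 'a \<Rightarrow> real" where
  "bellman_rhs \<eta> C \<theta> v b a =
     cbar C b a + (\<Sum>ob\<in>UNIV. Pobs \<eta> \<theta> b a ob * v (tau \<eta> \<theta> b a ob))"

definition acoe_sol ::
  "('s::finite \<Rightarrow> 'o::finite \<Rightarrow> real) \<Rightarrow> ('s \<Rightarrow> 'a::finite \<Rightarrow> real) \<Rightarrow> real \<Rightarrow> ('s, 'a) kern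
   \<Rightarrow> real \<Rightarrow> (('s \<Rightarrow> real) \<Rightarrow> real) \<Rightarrow> bool" where
  "acoe_sol \<eta> C H \<theta> J v \<longleftrightarrow>
     bdd_above (v ` Dist) \<and> bdd_below (v ` Dist) \<and>
     (INF b\<in>Dist. v b) = 0 \<and> (\<forall>b\<in>Dist. v b \<le> H) \<and>
     (\<forall>b\<in>Dist. J + v b = Min (range (bellman_rhs \<eta> C \<theta> v b)))"

definition Theta_H ::
  "('s::finite \<Rightarrow> 'o::finite \<Rightarrow> real) \<Rightarrow> ('s \<Rightarrow> 'a::finite \<Rightarrow> real) \<Rightarrow> real \<Rightarrow> ('s, 'a) kern set" where
  "Theta_H \<eta> C H = {\<theta>. is_kernel \<theta> \<and> (\<exists>J v. acoe_sol \<eta> C H \<theta> J v)}"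

text \<open>h_1(s;theta) proportional to eta(o_1|s) h(s;theta) (if the constant is zero we keep h(.;theta)).\<close>
definition init_belief :: "('s::finite \<Rightarrow> 'o \<Rightarrow> real) \<Rightarrow> (('s, 'a) kern \<Rightarrow> 's \<Rightarrow> real)
   \<Rightarrow> ('s, 'a) kern \<Rightarrow> 'o \<Rightarrow> ('s \<Rightarrow> real)" where
  "init_belief \<eta> h \<theta> o1 =
     (let Z = (\<Sum>s\<in>UNIV. \<eta> s o1 * h \<theta> s) in
      if Z = 0 then h \<theta> else (\<lambda>s. \<eta> s o1 * h \<theta> s / Z))"

definition belief :: "('s::finite \<Rightarrow> 'o \<Rightarrow> real) \<Rightarrow> (('s, 'a) kern \<Rightarrow> 's \<Rightarrow> real)
   \<Rightarrow> ('s, 'a) kern \<Rightarrow> ('a, 'o) hist \<Rightarrow> ('s \<Rightarrow> real)" where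
  "belief \<eta> h \<theta> hs =
     foldl (\<lambda>b (a, ob). tau \<eta> \<theta> b a ob) (init_belief \<eta> h \<theta> (fst hs)) (snd hs)"

text \<open>Likelihood of the observations in the history under theta (action choices
  do not depend on theta and cancel in Bayes' rule).\<close>
definition lik :: "('s::finite \<Rightarrow> 'o \<Rightarrow> real) \<Rightarrow> (('s, 'a) kern \<Rightarrow> 's \<Rightarrow> real)
   \<Rightarrow> ('s, 'a) kern \<Rightarrow> ('a, 'o) hist \<Rightarrow> real" where
  "lik \<eta> h \<theta> hs =
     snd (foldl (\<lambda>(b, p) (a, ob). (tau \<eta> \<theta> b a ob, p * Pobs \<eta> \<theta> b a ob))
                (init_belief \<eta> h \<theta> (fst hs), \<Sum>s\<in>UNIV. \<eta> s (fst hs) * h \<theta> s) (snd hs))"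

text \<open>Posterior f_t of theta_* given F_t, for the prior F (a probability measure on Theta).
  On histories of zero marginal likelihood we use the prior (convention).\<close>
definition posterior :: "('s::finite, 'a) kern measure \<Rightarrow> ('s \<Rightarrow> 'o \<Rightarrow> real)
   \<Rightarrow> (('s, 'a) kern \<Rightarrow> 's \<Rightarrow> real) \<Rightarrow> ('a, 'o) hist \<Rightarrow> ('s, 'a) kern measure" where
  "posterior F \<eta> h hs =
     (let Z = (\<integral>\<theta>. lik \<eta> h \<theta> hs \<partial>F) in
      if 0 < Z then density F (\<lambda>\<theta>. ennreal (lik \<eta> h \<theta> hs / Z)) else F)"

text \<open>ep_expect ... g n s hs th: expected value of the sum of the per-step quantity
  g over the next n steps, when the current hidden state is s, the observed history
  is hs (= F_t) and the sample of the current episode is th.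
  At time t a new episode starts iff t = 1 or newep hs (stopping rule determined by
  the observed history); then theta_k is drawn from the posterior f_t.
  The action is a_t = pol theta_k (h_t(.;theta_k)); the per-step quantity
  g s_t a_t theta_k F_t (new episode flag) is collected; then
  s_(t+1) ~ theta_*(.|s_t,a_t) and o_(t+1) ~ eta(.|s_(t+1)).\<close>
primrec ep_expect ::
  "('s::finite \<Rightarrow> 'o::finite \<Rightarrow> real) \<Rightarrow> (('s, 'a::finite) kern \<Rightarrow> 's \<Rightarrow> real) \<Rightarrow> ('s, 'a) kern
   \<Rightarrow> ('s, 'a) kern measure \<Rightarrow> (('a, 'o) hist \<Rightarrow> bool)
   \<Rightarrow> (('s, 'a) kern \<Rightarrow> ('s \<Rightarrow> real) \<Rightarrow> 'a)
   \<Rightarrow> ('s \<Rightarrow> 'a \<Rightarrow> ('s, 'a) kern \<Rightarrow> ('a, 'o) hist \<Rightarrow> bool \<Rightarrow> real)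
   \<Rightarrow> nat \<Rightarrow> 's \<Rightarrow> ('a, 'o) hist \<Rightarrow> ('s, 'a) kern \<Rightarrow> real" where
  "ep_expect \<eta> h \<theta>s F newep pol g 0 s hs th = 0"
| "ep_expect \<eta> h \<theta>s F newep pol g (Suc n) s hs th =
     (let step = (\<lambda>\<theta>' fl.
          let a = pol \<theta>' (belief \<eta> h \<theta>' hs) in
          g s a \<theta>' hs fl +
          (\<Sum>s'\<in>UNIV. \<theta>s s a s' *
             (\<Sum>ob\<in>UNIV. \<eta> s' ob * ep_expect \<eta> h \<theta>s F newep pol g n s' (fst hs, snd hs @ [(a, ob)]) \<theta>')))
      in if snd hs = [] \<or> newep hs
         then (\<integral>\<theta>'. step \<theta>' True \<partial>(posterior F \<eta> h hs))
         else step th False)"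

text \<open>E_{theta_*}[ sum_{t=1}^T g(...) ] with s_1 ~ h(.;theta_*), o_1 ~ eta(.|s_1).\<close>
definition expect_sum ::
  "('s::finite \<Rightarrow> 'o::finite \<Rightarrow> real) \<Rightarrow> (('s, 'a::finite) kern \<Rightarrow> 's \<Rightarrow> real) \<Rightarrow> ('s, 'a) kern
   \<Rightarrow> ('s, 'a) kern measure \<Rightarrow> (('a, 'o) hist \<Rightarrow> bool)
   \<Rightarrow> (('s, 'a) kern \<Rightarrow> ('s \<Rightarrow> real) \<Rightarrow> 'a)
   \<Rightarrow> ('s \<Rightarrow> 'a \<Rightarrow> ('s, 'a) kern \<Rightarrow> ('a, 'o) hist \<Rightarrow> bool \<Rightarrow> real) \<Rightarrow> nat \<Rightarrow> real" where
  "expect_sum \<eta> h \<theta>s F newep pol g T =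
     (\<Sum>s\<in>UNIV. h \<theta>s s * (\<Sum>ob\<in>UNIV. \<eta> s ob *
        ep_expect \<eta> h \<theta>s F newep pol g T s (ob, []) undefined))"

end

theory Submission
  imports Defs
begin


lemma Dist_nonneg: "b \<in> Dist \<Longrightarrow> 0 \<le> b s" by (simp add: Dist_def)
lemma Dist_sum: "b \<in> Dist \<Longrightarrow> (\<Sum>s\<in>UNIV. b s) = 1" by (simp add: Dist_def)
lemma Dist_le1: "b \<in> Dist \<Longrightarrow> b s \<le> (1::real)"
proof -
  assume b: "b \<in> Dist"
  have "b s \<le> (\<Sum>s\<in>UNIV. b s)" 
    by (rule member_le_sum) (auto simp: Dist_nonneg[OF b])
  thus ?thesis using Dist_sum[OF b] by simp
qed

lemma Pobs_nonneg:
  assumes "\<forall>s. \<eta> s \<in> Dist" "is_kernel \<theta>" "b \<in> Dist"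
  shows "0 \<le> Pobs \<eta> \<theta> b a ob"
  using assms unfolding Pobs_def is_kernel_def
  by (intro sum_nonneg mult_nonneg_nonneg) (auto simp: Dist_nonneg)

lemma Pobs_sum:
  fixes \<eta> :: "'s::finite \<Rightarrow> 'o::finite \<Rightarrow> real"
  assumes eta: "\<forall>s. \<eta> s \<in> Dist" and k: "is_kernel \<theta>" and b: "b \<in> Dist"
  shows "(\<Sum>ob\<in>UNIV. Pobs \<eta> \<theta> b a ob) = 1"
proof -
  have "(\<Sum>ob\<in>UNIV. Pobs \<eta> \<theta> b a ob) = (\<Sum>ob\<in>UNIV. \<Sum>s'\<in>UNIV. \<Sum>s\<in>UNIV. \<eta> s' ob * \<theta> s a s' * b s)"
    unfolding Pobs_def ..
  also have "\<dots> = (\<Sum>s'\<in>UNIV. \<Sum>ob\<in>UNIV. \<Sum>s\<in>UNIV. \<eta> s' ob * \<theta> s a s' * b s)"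
    by (rule sum.swap)
  also have "\<dots> = (\<Sum>s'\<in>UNIV. \<Sum>s\<in>UNIV. \<Sum>ob\<in>UNIV. \<eta> s' ob * \<theta> s a s' * b s)"
    by (rule sum.cong[OF refl], rule sum.swap)
  also have "\<dots> = (\<Sum>s'\<in>UNIV. \<Sum>s\<in>UNIV. (\<Sum>ob\<in>UNIV. \<eta> s' ob) * \<theta> s a s' * b s)"
    by (simp add: sum_distrib_right)
  also have "\<dots> = (\<Sum>s'\<in>UNIV. \<Sum>s\<in>UNIV. \<theta> s a s' * b s)"
    using eta by (simp add: Dist_sum)
  also have "\<dots> = (\<Sum>s\<in>UNIV. b s * (\<Sum>s'\<in>UNIV. \<theta> s a s'))"
    by (subst sum.swap) (simp add: sum_distrib_left mult.commute)
  also have "\<dots> = 1" using k b unfolding is_kernel_def by (simp add: Dist_sum)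
  finally show ?thesis .
qed

lemma tau_Dist:
  fixes \<eta> :: "'s::finite \<Rightarrow> 'o::finite \<Rightarrow> real"
  assumes eta: "\<forall>s. \<eta> s \<in> Dist" and k: "is_kernel \<theta>" and b: "b \<in> Dist"
  shows "tau \<eta> \<theta> b a ob \<in> Dist"
proof (cases "Pobs \<eta> \<theta> b a ob = 0")
  case True thus ?thesis using b by (simp add: tau_def)
next
  case False
  have P: "0 < Pobs \<eta> \<theta> b a ob" using False Pobs_nonneg[OF eta k b, of a ob] by linarith
  have nn: "0 \<le> (\<Sum>s\<in>UNIV. \<eta> s' ob * \<theta> s a s' * b s)" for s'
    using eta k b unfolding is_kernel_def
    by (intro sum_nonneg mult_nonneg_nonneg) (auto simp: Dist_nonneg)
  have "(\<Sum>s'\<in>UNIV. (\<Sum>s\<in>UNIV. \<eta> s' ob * \<theta> s a s' * b s) / Pobs \<eta> \<theta> b a ob) = 1"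
    using P by (simp add: sum_divide_distrib[symmetric] Pobs_def)
  thus ?thesis using False P nn by (simp add: tau_def Dist_def)
qed

lemma init_belief_Dist:
  fixes \<eta> :: "'s::finite \<Rightarrow> 'o::finite \<Rightarrow> real"
  assumes eta: "\<forall>s. \<eta> s \<in> Dist" and hD: "h \<theta> \<in> Dist"
  shows "init_belief \<eta> h \<theta> o1 \<in> Dist"
proof (cases "(\<Sum>s\<in>UNIV. \<eta> s o1 * h \<theta> s) = 0")
  case True thus ?thesis using hD by (simp add: init_belief_def)
next
  case False
  have nn: "0 \<le> \<eta> s o1 * h \<theta> s" for s using eta hD by (auto simp: Dist_nonneg)
  hence P: "0 < (\<Sum>s\<in>UNIV. \<eta> s o1 * h \<theta> s)" using False sum_nonneg[of UNIV "\<lambda>s. \<eta> s o1 * h \<theta> s"] by force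
  show ?thesis using False P nn
    by (simp add: init_belief_def Dist_def Let_def sum_divide_distrib[symmetric])
qed

lemma belief_snoc: "belief \<eta> h \<theta> (ob1, xs @ [(a, ob)]) = tau \<eta> \<theta> (belief \<eta> h \<theta> (ob1, xs)) a ob"
  by (simp add: belief_def)

lemma belief_Dist:
  fixes \<eta> :: "'s::finite \<Rightarrow> 'o::finite \<Rightarrow> real"
  assumes eta: "\<forall>s. \<eta> s \<in> Dist" and k: "is_kernel \<theta>" and hD: "h \<theta> \<in> Dist"
  shows "belief \<eta> h \<theta> hs \<in> Dist"
proof -
  obtain ob1 xs where hs: "hs = (ob1, xs)" by (cases hs)
  show ?thesis unfolding hs
  proof (induction xs rule: rev_induct)
    case Nil thus ?case using init_belief_Dist[where h=h and \<theta>=\<theta>, OF eta hD] by (simp add: belief_def)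
  next
    case (snoc x xs) thus ?case using tau_Dist[OF eta k] by (cases x) (simp add: belief_snoc)
  qed
qed


lemma weight:
  fixes \<eta> :: "'s::finite \<Rightarrow> 'o::finite \<Rightarrow> real"
  assumes eta: "\<forall>s. \<eta> s \<in> Dist" and k: "is_kernel \<theta>" and b: "b \<in> Dist"
  shows "(\<Sum>s\<in>UNIV. b s * \<theta> s a s' * \<eta> s' ob) = Pobs \<eta> \<theta> b a ob * tau \<eta> \<theta> b a ob s'"
proof (cases "Pobs \<eta> \<theta> b a ob = 0")
  case True
  have nn: "\<And>x. 0 \<le> (\<Sum>s\<in>UNIV. \<eta> x ob * \<theta> s a x * b s)"
    using eta k b unfolding is_kernel_def
    by (intro sum_nonneg mult_nonneg_nonneg) (auto simp: Dist_nonneg)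
  have "(\<Sum>s\<in>UNIV. \<eta> s' ob * \<theta> s a s' * b s) = 0"
    using True nn unfolding Pobs_def by (simp add: sum_nonneg_eq_0_iff)
  thus ?thesis using True by (simp add: algebra_simps)
next
  case False
  thus ?thesis by (simp add: tau_def algebra_simps)
qed

lemma L7:
  fixes \<eta> :: "'s::finite \<Rightarrow> 'o::finite \<Rightarrow> real"
  assumes eta: "\<forall>s. \<eta> s \<in> Dist" and k2: "is_kernel \<theta>2" and b1: "b1 \<in> Dist"
    and V: "\<forall>ob. 0 \<le> V ob \<and> V ob \<le> H"
  shows "(\<Sum>ob\<in>UNIV. (Pobs \<eta> \<theta>1 b1 a ob - Pobs \<eta> \<theta>2 b2 a ob) * V ob)
         \<le> H * ((\<Sum>s\<in>UNIV. b1 s * (\<Sum>s'\<in>UNIV. \<bar>\<theta>1 s a s' - \<theta>2 s a s'\<bar>)) + (\<Sum>s\<in>UNIV. \<bar>b1 s - b2 s\<bar>))"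
proof -
  have H0: "0 \<le> H" using V by (meson order_trans)
  have e0: "0 \<le> \<eta> s ob" for s ob using eta by (simp add: Dist_nonneg)
  have t0: "0 \<le> \<theta>2 s a s'" for s s' using k2 unfolding is_kernel_def by (simp add: Dist_nonneg)
  have "(\<Sum>ob\<in>UNIV. (Pobs \<eta> \<theta>1 b1 a ob - Pobs \<eta> \<theta>2 b2 a ob) * V ob)
        \<le> (\<Sum>ob\<in>UNIV. \<bar>Pobs \<eta> \<theta>1 b1 a ob - Pobs \<eta> \<theta>2 b2 a ob\<bar> * H)"
  proof (rule sum_mono)
    fix ob
    have "(Pobs \<eta> \<theta>1 b1 a ob - Pobs \<eta> \<theta>2 b2 a ob) * V ob \<le> \<bar>Pobs \<eta> \<theta>1 b1 a ob - Pobs \<eta> \<theta>2 b2 a ob\<bar> * V ob"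
      using V by (intro mult_right_mono) auto
    also have "\<dots> \<le> \<bar>Pobs \<eta> \<theta>1 b1 a ob - Pobs \<eta> \<theta>2 b2 a ob\<bar> * H"
      using V by (intro mult_left_mono) auto
    finally show "(Pobs \<eta> \<theta>1 b1 a ob - Pobs \<eta> \<theta>2 b2 a ob) * V ob \<le> \<bar>Pobs \<eta> \<theta>1 b1 a ob - Pobs \<eta> \<theta>2 b2 a ob\<bar> * H" .
  qed
  also have "\<dots> = H * (\<Sum>ob\<in>UNIV. \<bar>Pobs \<eta> \<theta>1 b1 a ob - Pobs \<eta> \<theta>2 b2 a ob\<bar>)"
    by (simp add: sum_distrib_left mult.commute)
  also have "(\<Sum>ob\<in>UNIV. \<bar>Pobs \<eta> \<theta>1 b1 a ob - Pobs \<eta> \<theta>2 b2 a ob\<bar>)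
      \<le> (\<Sum>ob\<in>UNIV. \<Sum>s'\<in>UNIV. \<Sum>s\<in>UNIV. \<eta> s' ob * \<bar>\<theta>1 s a s' * b1 s - \<theta>2 s a s' * b2 s\<bar>)"
  proof (rule sum_mono)
    fix ob
    have "Pobs \<eta> \<theta>1 b1 a ob - Pobs \<eta> \<theta>2 b2 a ob = (\<Sum>s'\<in>UNIV. \<Sum>s\<in>UNIV. \<eta> s' ob * (\<theta>1 s a s' * b1 s - \<theta>2 s a s' * b2 s))"
      unfolding Pobs_def by (simp add: sum_subtractf[symmetric] algebra_simps)
    also have "\<bar>\<dots>\<bar> \<le> (\<Sum>s'\<in>UNIV. \<Sum>s\<in>UNIV. \<bar>\<eta> s' ob * (\<theta>1 s a s' * b1 s - \<theta>2 s a s' * b2 s)\<bar>)"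
      by (rule order_trans[OF sum_abs sum_mono[OF sum_abs]])
    also have "\<dots> = (\<Sum>s'\<in>UNIV. \<Sum>s\<in>UNIV. \<eta> s' ob * \<bar>\<theta>1 s a s' * b1 s - \<theta>2 s a s' * b2 s\<bar>)"
      using e0 by (simp add: abs_mult)
    finally show "\<bar>Pobs \<eta> \<theta>1 b1 a ob - Pobs \<eta> \<theta>2 b2 a ob\<bar> \<le> \<dots>" .
  qed
  also have "\<dots> = (\<Sum>s'\<in>UNIV. \<Sum>s\<in>UNIV. \<Sum>ob\<in>UNIV. \<eta> s' ob * \<bar>\<theta>1 s a s' * b1 s - \<theta>2 s a s' * b2 s\<bar>)"
    by (subst sum.swap, rule sum.cong[OF refl], rule sum.swap)
  also have "\<dots> = (\<Sum>s'\<in>UNIV. \<Sum>s\<in>UNIV. \<bar>\<theta>1 s a s' * b1 s - \<theta>2 s a s' * b2 s\<bar>)"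
    using eta by (simp add: sum_distrib_right[symmetric] Dist_sum)
  also have "\<dots> \<le> (\<Sum>s'\<in>UNIV. \<Sum>s\<in>UNIV. b1 s * \<bar>\<theta>1 s a s' - \<theta>2 s a s'\<bar> + \<theta>2 s a s' * \<bar>b1 s - b2 s\<bar>)"
  proof (intro sum_mono)
    fix s s'
    have "\<theta>1 s a s' * b1 s - \<theta>2 s a s' * b2 s = b1 s * (\<theta>1 s a s' - \<theta>2 s a s') + \<theta>2 s a s' * (b1 s - b2 s)"
      by (simp add: algebra_simps)
    hence "\<bar>\<theta>1 s a s' * b1 s - \<theta>2 s a s' * b2 s\<bar> \<le> \<bar>b1 s * (\<theta>1 s a s' - \<theta>2 s a s')\<bar> + \<bar>\<theta>2 s a s' * (b1 s - b2 s)\<bar>"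
      by (metis abs_triangle_ineq)
    also have "\<dots> = b1 s * \<bar>\<theta>1 s a s' - \<theta>2 s a s'\<bar> + \<theta>2 s a s' * \<bar>b1 s - b2 s\<bar>"
      using t0[of s s'] Dist_nonneg[OF b1, of s] by (simp add: abs_mult)
    finally show "\<bar>\<theta>1 s a s' * b1 s - \<theta>2 s a s' * b2 s\<bar> \<le> \<dots>" .
  qed
  also have "\<dots> = (\<Sum>s\<in>UNIV. b1 s * (\<Sum>s'\<in>UNIV. \<bar>\<theta>1 s a s' - \<theta>2 s a s'\<bar>)) + (\<Sum>s\<in>UNIV. \<bar>b1 s - b2 s\<bar> * (\<Sum>s'\<in>UNIV. \<theta>2 s a s'))"
    by (subst sum.swap) (simp add: sum.distrib sum_distrib_left sum_distrib_right mult.commute)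
  also have "\<dots> = (\<Sum>s\<in>UNIV. b1 s * (\<Sum>s'\<in>UNIV. \<bar>\<theta>1 s a s' - \<theta>2 s a s'\<bar>)) + (\<Sum>s\<in>UNIV. \<bar>b1 s - b2 s\<bar>)"
    using k2 unfolding is_kernel_def by (simp add: Dist_sum)
  finally show ?thesis using H0 by (simp add: mult_left_mono)
qed


locale pm =
  fixes \<eta> :: "'s::finite \<Rightarrow> 'o::finite \<Rightarrow> real"
    and C :: "'s \<Rightarrow> 'a::finite \<Rightarrow> real"
    and h :: "('s, 'a) kern \<Rightarrow> 's \<Rightarrow> real"
    and H :: real
    and \<Theta> :: "('s, 'a) kern set"
    and F :: "('s, 'a) kern measure"
    and \<theta>s :: "('s, 'a) kern"
    and J :: "('s, 'a) kern \<Rightarrow> real"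
    and v :: "('s, 'a) kern \<Rightarrow> ('s \<Rightarrow> real) \<Rightarrow> real"
    and pol :: "('s, 'a) kern \<Rightarrow> ('s \<Rightarrow> real) \<Rightarrow> 'a"
    and newep :: "('a, 'o) hist \<Rightarrow> bool"
  assumes eta: "\<forall>s. \<eta> s \<in> Dist"
    and cost: "\<forall>s a. 0 \<le> C s a \<and> C s a \<le> 1"
    and init: "\<forall>\<theta>\<in>\<Theta>. h \<theta> \<in> Dist"
    and Theta: "\<Theta> \<subseteq> Theta_H \<eta> C H"
    and sol: "\<forall>\<theta>\<in>\<Theta>. acoe_sol \<eta> C H \<theta> (J \<theta>) (v \<theta>)"
    and pol_min: "\<forall>\<theta>\<in>\<Theta>. \<forall>b\<in>Dist.
                    bellman_rhs \<eta> C \<theta> (v \<theta>) b (pol \<theta> b) = Min (range (bellman_rhs \<eta> C \<theta> (v \<theta>) b))"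
    and prior: "prob_space F" "space F = \<Theta>"
    and meas_kernel: "\<forall>s a s'. (\<lambda>\<theta>. \<theta> s a s') \<in> borel_measurable F"
    and meas_init: "\<forall>s. (\<lambda>\<theta>. h \<theta> s) \<in> borel_measurable F"
    and meas_J: "J \<in> borel_measurable F"
    and meas_pol: "\<forall>hs. (\<lambda>\<theta>. pol \<theta> (belief \<eta> h \<theta> hs)) \<in> measurable F (count_space UNIV)"
    and true_param: "\<theta>s \<in> \<Theta>"
begin

lemma kern: "\<theta> \<in> \<Theta> \<Longrightarrow> is_kernel \<theta>" using Theta by (auto simp: Theta_H_def)

lemma ker01: "\<theta> \<in> \<Theta> \<Longrightarrow> 0 \<le> \<theta> s a s' \<and> \<theta> s a s' \<le> 1"
  using kern[of \<theta>] unfolding is_kernel_def by (auto simp: Dist_nonneg Dist_le1)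

lemma eta01: "0 \<le> \<eta> s ob \<and> \<eta> s ob \<le> 1"
  using eta by (auto simp: Dist_nonneg Dist_le1)

lemma bel_Dist: "\<theta> \<in> \<Theta> \<Longrightarrow> belief \<eta> h \<theta> hs \<in> Dist"
  using belief_Dist[where h=h and \<theta>=\<theta>, OF eta kern] init by auto

lemma bel01: "\<theta> \<in> \<Theta> \<Longrightarrow> 0 \<le> belief \<eta> h \<theta> hs s \<and> belief \<eta> h \<theta> hs s \<le> 1"
  using bel_Dist by (auto simp: Dist_nonneg Dist_le1)

lemma v_bounds: "\<theta> \<in> \<Theta> \<Longrightarrow> b \<in> Dist \<Longrightarrow> 0 \<le> v \<theta> b \<and> v \<theta> b \<le> H"
proof -
  assume th: "\<theta> \<in> \<Theta>" and b: "b \<in> Dist"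
  have a: "acoe_sol \<eta> C H \<theta> (J \<theta>) (v \<theta>)" using sol th by auto
  hence "(INF b\<in>Dist. v \<theta> b) \<le> v \<theta> b" using b unfolding acoe_sol_def by (intro cINF_lower) auto
  thus ?thesis using a b unfolding acoe_sol_def by auto
qed

lemma bellman:
  assumes th: "\<theta> \<in> \<Theta>" and b: "b \<in> Dist"
  shows "J \<theta> + v \<theta> b = cbar C b (pol \<theta> b) + (\<Sum>ob\<in>UNIV. Pobs \<eta> \<theta> b (pol \<theta> b) ob * v \<theta> (tau \<eta> \<theta> b (pol \<theta> b) ob))"
proof -
  have a: "acoe_sol \<eta> C H \<theta> (J \<theta>) (v \<theta>)" using sol th by auto
  hence "J \<theta> + v \<theta> b = Min (range (bellman_rhs \<eta> C \<theta> (v \<theta>) b))" using b unfolding acoe_sol_def by auto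
  also have "\<dots> = bellman_rhs \<eta> C \<theta> (v \<theta>) b (pol \<theta> b)" using pol_min th b by auto
  finally show ?thesis by (simp add: bellman_rhs_def)
qed

lemma cbar_bounds: "b \<in> Dist \<Longrightarrow> 0 \<le> cbar C b a \<and> cbar C b a \<le> 1"
proof -
  assume b: "b \<in> Dist"
  have "cbar C b a \<le> (\<Sum>s\<in>UNIV. 1 * b s)" unfolding cbar_def
    using cost b by (intro sum_mono mult_right_mono) (auto simp: Dist_nonneg)
  moreover have "0 \<le> cbar C b a" unfolding cbar_def
    using cost b by (intro sum_nonneg mult_nonneg_nonneg) (auto simp: Dist_nonneg)
  ultimately show ?thesis using b by (simp add: Dist_sum)
qed

lemma J_bound: "\<theta> \<in> \<Theta> \<Longrightarrow> \<bar>J \<theta>\<bar> \<le> 1 + 2 * H"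
proof -
  assume th: "\<theta> \<in> \<Theta>"
  define b where "b = h \<theta>"
  have b: "b \<in> Dist" using init th b_def by auto
  define a where "a = pol \<theta> b"
  have tD: "tau \<eta> \<theta> b a ob \<in> Dist" for ob using tau_Dist[OF eta kern[OF th] b] .
  have S: "0 \<le> (\<Sum>ob\<in>UNIV. Pobs \<eta> \<theta> b a ob * v \<theta> (tau \<eta> \<theta> b a ob)) \<and>
           (\<Sum>ob\<in>UNIV. Pobs \<eta> \<theta> b a ob * v \<theta> (tau \<eta> \<theta> b a ob)) \<le> H"
  proof
    show "0 \<le> (\<Sum>ob\<in>UNIV. Pobs \<eta> \<theta> b a ob * v \<theta> (tau \<eta> \<theta> b a ob))"
      using Pobs_nonneg[OF eta kern[OF th] b] v_bounds[OF th tD] by (intro sum_nonneg mult_nonneg_nonneg) auto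
    have "(\<Sum>ob\<in>UNIV. Pobs \<eta> \<theta> b a ob * v \<theta> (tau \<eta> \<theta> b a ob)) \<le> (\<Sum>ob\<in>UNIV. Pobs \<eta> \<theta> b a ob * H)"
      using Pobs_nonneg[OF eta kern[OF th] b] v_bounds[OF th tD] by (intro sum_mono mult_left_mono) auto
    also have "\<dots> = H" using Pobs_sum[OF eta kern[OF th] b] by (simp add: sum_distrib_right[symmetric])
    finally show "(\<Sum>ob\<in>UNIV. Pobs \<eta> \<theta> b a ob * v \<theta> (tau \<eta> \<theta> b a ob)) \<le> H" .
  qed
  have "J \<theta> + v \<theta> b = cbar C b a + (\<Sum>ob\<in>UNIV. Pobs \<eta> \<theta> b a ob * v \<theta> (tau \<eta> \<theta> b a ob))"
    using bellman[OF th b] a_def by simp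
  thus ?thesis using S v_bounds[OF th b] cbar_bounds[OF b, of a] by linarith
qed

lemma H_nonneg: "0 \<le> H"
  using v_bounds[OF true_param init[rule_format, OF true_param]] by linarith

lemma mk[measurable]: "(\<lambda>\<theta>. \<theta> s a s') \<in> borel_measurable F" using meas_kernel by auto
lemma mi[measurable]: "(\<lambda>\<theta>. h \<theta> s) \<in> borel_measurable F" using meas_init by auto
lemma mJ[measurable]: "J \<in> borel_measurable F" using meas_J by auto

lemma m_init: "(\<lambda>\<theta>. init_belief \<eta> h \<theta> o1 s) \<in> borel_measurable F"
proof -
  have "(\<lambda>\<theta>. init_belief \<eta> h \<theta> o1 s) = (\<lambda>\<theta>. if (\<Sum>s\<in>UNIV. \<eta> s o1 * h \<theta> s) = 0 then h \<theta> s
          else \<eta> s o1 * h \<theta> s / (\<Sum>s\<in>UNIV. \<eta> s o1 * h \<theta> s))"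
    by (auto simp: init_belief_def Let_def fun_eq_iff)
  also have "\<dots> \<in> borel_measurable F" by measurable
  finally show ?thesis .
qed

lemma m_tau:
  assumes [measurable]: "\<And>s. (\<lambda>\<theta>. b \<theta> s) \<in> borel_measurable F"
  shows "(\<lambda>\<theta>. tau \<eta> \<theta> (b \<theta>) a ob s') \<in> borel_measurable F"
proof -
  have "(\<lambda>\<theta>. tau \<eta> \<theta> (b \<theta>) a ob s') = (\<lambda>\<theta>. if (\<Sum>s'\<in>UNIV. \<Sum>s\<in>UNIV. \<eta> s' ob * \<theta> s a s' * b \<theta> s) = 0 then b \<theta> s'
          else (\<Sum>s\<in>UNIV. \<eta> s' ob * \<theta> s a s' * b \<theta> s) / (\<Sum>s'\<in>UNIV. \<Sum>s\<in>UNIV. \<eta> s' ob * \<theta> s a s' * b \<theta> s))"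
    by (auto simp: tau_def Pobs_def fun_eq_iff)
  also have "\<dots> \<in> borel_measurable F" by measurable
  finally show ?thesis .
qed

lemma m_bel[measurable]: "(\<lambda>\<theta>. belief \<eta> h \<theta> hs s) \<in> borel_measurable F"
proof -
  obtain o1 xs where hs: "hs = (o1, xs)" by (cases hs)
  have "\<forall>s. (\<lambda>\<theta>. belief \<eta> h \<theta> (o1, xs) s) \<in> borel_measurable F"
  proof (induction xs rule: rev_induct)
    case Nil thus ?case using m_init by (simp add: belief_def)
  next
    case (snoc x xs) thus ?case using m_tau by (cases x) (simp add: belief_snoc)
  qed
  thus ?thesis using hs by simp
qed

lemma post_sets: "sets (posterior F \<eta> h hs) = sets F"
  by (simp add: posterior_def Let_def)

lemma post_space: "space (posterior F \<eta> h hs) = \<Theta>"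
  using prior by (simp add: posterior_def Let_def)

lemma post_fin: "finite_measure (posterior F \<eta> h hs)"
proof (cases "0 < (\<integral>\<theta>. lik \<eta> h \<theta> hs \<partial>F)")
  case True
  define Z where "Z = (\<integral>\<theta>. lik \<eta> h \<theta> hs \<partial>F)"
  have "integrable F (\<lambda>\<theta>. lik \<eta> h \<theta> hs)" using True not_integrable_integral_eq by force
  hence I: "integrable F (\<lambda>\<theta>. lik \<eta> h \<theta> hs / Z)" by auto
  hence M: "(\<lambda>\<theta>. ennreal (lik \<eta> h \<theta> hs / Z)) \<in> borel_measurable F" by auto
  have "emeasure (density F (\<lambda>\<theta>. ennreal (lik \<eta> h \<theta> hs / Z))) (space F) = (\<integral>\<^sup>+ x. ennreal (lik \<eta> h x hs / Z) * indicator (space F) x \<partial>F)"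
    by (rule emeasure_density[OF M]) auto
  also have "\<dots> = (\<integral>\<^sup>+ x. ennreal (lik \<eta> h x hs / Z) \<partial>F)"
    by (rule nn_integral_cong) auto
  also have "\<dots> \<noteq> \<infinity>" using integrableD(2)[OF I] .
  finally show ?thesis using True unfolding posterior_def Z_def[symmetric] Let_def
    by (intro finite_measureI) simp
next
  case False
  interpret prob_space F by (rule prior(1))
  show ?thesis using False unfolding posterior_def Let_def by (simp add: finite_measure_axioms)
qed

lemma post_int:
  fixes f :: "_ \<Rightarrow> real" and B :: real
  assumes "f \<in> borel_measurable F" "\<forall>\<theta>\<in>\<Theta>. \<bar>f \<theta>\<bar> \<le> B"
  shows "integrable (posterior F \<eta> h hs) f"
proof -
  interpret finite_measure "posterior F \<eta> h hs" by (rule post_fin)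
  show ?thesis
    using assms post_space[of hs] measurable_cong_sets[OF post_sets refl, of hs]
    by (intro integrable_const_bound[where B=B]) auto
qed


abbreviation E where "E g n s hs th \<equiv> ep_expect \<eta> h \<theta>s F newep pol g n s hs th"

definition stepf where
  "stepf g n s hs \<theta>' fl = (let a = pol \<theta>' (belief \<eta> h \<theta>' hs) in g s a \<theta>' hs fl +
     (\<Sum>s'\<in>UNIV. \<theta>s s a s' * (\<Sum>ob\<in>UNIV. \<eta> s' ob * E g n s' (fst hs, snd hs @ [(a, ob)]) \<theta>')))"

lemma E_Suc: "E g (Suc n) s hs th = (if snd hs = [] \<or> newep hs
   then (\<integral>\<theta>'. stepf g n s hs \<theta>' True \<partial>(posterior F \<eta> h hs)) else stepf g n s hs th False)"
  by (simp add: stepf_def Let_def)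

definition good :: "('s \<Rightarrow> 'a \<Rightarrow> ('s, 'a) kern \<Rightarrow> ('a, 'o) hist \<Rightarrow> bool \<Rightarrow> real) \<Rightarrow> bool" where
  "good g \<longleftrightarrow> (\<forall>s a hs fl. (\<lambda>\<theta>. g s a \<theta> hs fl) \<in> borel_measurable F) \<and>
     (\<forall>s hs fl. \<exists>B. \<forall>a. \<forall>\<theta>\<in>\<Theta>. \<bar>g s a \<theta> hs fl\<bar> \<le> B)"

lemma aux_bound:
  fixes x :: real
  assumes "\<bar>x\<bar> \<le> 1" "\<forall>ob. \<bar>y ob\<bar> \<le> 1" "\<forall>ob. \<bar>e ob\<bar> \<le> c ob"
  shows "\<bar>x * (\<Sum>ob\<in>UNIV. y ob * e ob)\<bar> \<le> (\<Sum>ob\<in>UNIV. c ob)"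
proof -
  have "\<bar>x * (\<Sum>ob\<in>UNIV. y ob * e ob)\<bar> \<le> \<bar>\<Sum>ob\<in>UNIV. y ob * e ob\<bar>"
    using assms(1) by (simp add: abs_mult mult_left_le_one_le)
  also have "\<dots> \<le> (\<Sum>ob\<in>UNIV. \<bar>y ob * e ob\<bar>)" by (rule sum_abs)
  also have "\<dots> \<le> (\<Sum>ob\<in>UNIV. c ob)"
  proof (rule sum_mono)
    fix ob
    have "\<bar>y ob * e ob\<bar> \<le> 1 * \<bar>e ob\<bar>" unfolding abs_mult using assms(2)
      by (intro mult_right_mono) auto
    thus "\<bar>y ob * e ob\<bar> \<le> c ob" using assms(3)[rule_format, of ob] by linarith
  qed
  finally show ?thesis .
qed

lemma stepf_props:
  assumes g: "good g"
    and IH: "\<forall>s hs. (\<lambda>\<theta>. E g n s hs \<theta>) \<in> borel_measurable F \<and> (\<exists>B. \<forall>\<theta>\<in>\<Theta>. \<bar>E g n s hs \<theta>\<bar> \<le> B)"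
  shows "(\<lambda>\<theta>. stepf g n s hs \<theta> fl) \<in> borel_measurable F \<and> (\<exists>B. \<forall>\<theta>\<in>\<Theta>. \<bar>stepf g n s hs \<theta> fl\<bar> \<le> B)"
proof
  define G where "G a \<theta> = g s a \<theta> hs fl + (\<Sum>s'\<in>UNIV. \<theta>s s a s' * (\<Sum>ob\<in>UNIV. \<eta> s' ob * E g n s' (fst hs, snd hs @ [(a, ob)]) \<theta>))" for a \<theta>
  have st: "stepf g n s hs \<theta> fl = G (pol \<theta> (belief \<eta> h \<theta> hs)) \<theta>" for \<theta> by (simp add: stepf_def G_def Let_def)
  have GM: "(\<lambda>\<theta>. G a \<theta>) \<in> borel_measurable F" for a
  proof -
    have gm: "\<And>s a hs fl. (\<lambda>\<theta>. g s a \<theta> hs fl) \<in> borel_measurable F" using g unfolding good_def by blast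
    have em: "\<And>s hs. (\<lambda>\<theta>. E g n s hs \<theta>) \<in> borel_measurable F" using IH by blast
    show ?thesis unfolding G_def
      by (intro borel_measurable_add borel_measurable_sum borel_measurable_times borel_measurable_const gm em)
  qed
  have "(\<lambda>\<theta>. G (pol \<theta> (belief \<eta> h \<theta> hs)) \<theta>) \<in> borel_measurable F"
    by (rule measurable_compose_countable'[where I=UNIV, OF _ meas_pol[rule_format]]) (auto intro: GM simp: countable_finite)
  thus "(\<lambda>\<theta>. stepf g n s hs \<theta> fl) \<in> borel_measurable F" by (simp add: st)
  have "\<forall>sh. \<exists>B. \<forall>\<theta>\<in>\<Theta>. \<bar>E g n (fst sh) (snd sh) \<theta>\<bar> \<le> B" using IH by auto
  then obtain Bf where Bf: "\<forall>sh. \<forall>\<theta>\<in>\<Theta>. \<bar>E g n (fst sh) (snd sh) \<theta>\<bar> \<le> Bf sh" using choice[of "\<lambda>sh B. \<forall>\<theta>\<in>\<Theta>. \<bar>E g n (fst sh) (snd sh) \<theta>\<bar> \<le> B"] by blast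
  obtain Bg where Bg: "\<forall>a. \<forall>\<theta>\<in>\<Theta>. \<bar>g s a \<theta> hs fl\<bar> \<le> Bg" using g unfolding good_def by blast
  define K where "K = (\<Sum>a'\<in>UNIV. \<Sum>s'\<in>UNIV. \<Sum>ob\<in>UNIV. \<bar>Bf (s', (fst hs, snd hs @ [(a', ob)]))\<bar>)"
  show "\<exists>B. \<forall>\<theta>\<in>\<Theta>. \<bar>stepf g n s hs \<theta> fl\<bar> \<le> B"
  proof (intro exI ballI)
    fix \<theta> assume th: "\<theta> \<in> \<Theta>"
    define a where "a = pol \<theta> (belief \<eta> h \<theta> hs)"
    have "\<bar>\<Sum>s'\<in>UNIV. \<theta>s s a s' * (\<Sum>ob\<in>UNIV. \<eta> s' ob * E g n s' (fst hs, snd hs @ [(a, ob)]) \<theta>)\<bar>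
        \<le> (\<Sum>s'\<in>UNIV. \<bar>\<theta>s s a s' * (\<Sum>ob\<in>UNIV. \<eta> s' ob * E g n s' (fst hs, snd hs @ [(a, ob)]) \<theta>)\<bar>)"
      by (rule sum_abs)
    also have "\<dots> \<le> (\<Sum>s'\<in>UNIV. \<Sum>ob\<in>UNIV. \<bar>Bf (s', (fst hs, snd hs @ [(a, ob)]))\<bar>)"
    proof (rule sum_mono, rule aux_bound)
      fix s'
      show "\<bar>\<theta>s s a s'\<bar> \<le> 1" using ker01[OF true_param, of s a s'] by (simp add: abs_le_iff)
      show "\<forall>ob. \<bar>\<eta> s' ob\<bar> \<le> 1" using eta01 by (simp add: abs_le_iff)
      show "\<forall>ob. \<bar>E g n s' (fst hs, snd hs @ [(a, ob)]) \<theta>\<bar> \<le> \<bar>Bf (s', (fst hs, snd hs @ [(a, ob)]))\<bar>"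
      proof
        fix ob
        have "\<bar>E g n s' (fst hs, snd hs @ [(a, ob)]) \<theta>\<bar> \<le> Bf (s', (fst hs, snd hs @ [(a, ob)]))"
          using bspec[OF spec[OF Bf, of "(s', (fst hs, snd hs @ [(a, ob)]))"] th] by simp
        thus "\<bar>E g n s' (fst hs, snd hs @ [(a, ob)]) \<theta>\<bar> \<le> \<bar>Bf (s', (fst hs, snd hs @ [(a, ob)]))\<bar>" by linarith
      qed
    qed
    also have "\<dots> \<le> K" unfolding K_def
      by (rule member_le_sum[where i=a and f="\<lambda>a'. \<Sum>s'\<in>UNIV. \<Sum>ob\<in>UNIV. \<bar>Bf (s', (fst hs, snd hs @ [(a', ob)]))\<bar>"])
         (auto intro: sum_nonneg)
    finally have "\<bar>\<Sum>s'\<in>UNIV. \<theta>s s a s' * (\<Sum>ob\<in>UNIV. \<eta> s' ob * E g n s' (fst hs, snd hs @ [(a, ob)]) \<theta>)\<bar> \<le> K" .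
    moreover have "\<bar>g s a \<theta> hs fl\<bar> \<le> Bg" using Bg th by auto
    ultimately show "\<bar>stepf g n s hs \<theta> fl\<bar> \<le> Bg + K"
      unfolding stepf_def Let_def a_def[symmetric] by (smt (verit))
  qed
qed

lemma good_ep:
  assumes g: "good g"
  shows "(\<lambda>\<theta>. E g n s hs \<theta>) \<in> borel_measurable F \<and> (\<exists>B. \<forall>\<theta>\<in>\<Theta>. \<bar>E g n s hs \<theta>\<bar> \<le> B)"
proof (induction n arbitrary: s hs)
  case 0 thus ?case by auto
next
  case (Suc n)
  have IH: "\<forall>s hs. (\<lambda>\<theta>. E g n s hs \<theta>) \<in> borel_measurable F \<and> (\<exists>B. \<forall>\<theta>\<in>\<Theta>. \<bar>E g n s hs \<theta>\<bar> \<le> B)"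
    using Suc by blast
  note sp = stepf_props[OF g IH]
  show ?case
  proof (cases "snd hs = [] \<or> newep hs")
    case True
    thus ?thesis unfolding E_Suc by auto
  next
    case False
    thus ?thesis unfolding E_Suc using sp[of s hs False] by simp
  qed
qed

lemma stepf_int:
  assumes g: "good g"
  shows "integrable (posterior F \<eta> h hs) (\<lambda>\<theta>. stepf g n s hs \<theta> fl)"
proof -
  have IH: "\<forall>s hs. (\<lambda>\<theta>. E g n s hs \<theta>) \<in> borel_measurable F \<and> (\<exists>B. \<forall>\<theta>\<in>\<Theta>. \<bar>E g n s hs \<theta>\<bar> \<le> B)"
    using good_ep[OF g] by blast
  obtain B where B: "\<forall>\<theta>\<in>\<Theta>. \<bar>stepf g n s hs \<theta> fl\<bar> \<le> B" using stepf_props[OF g IH] by blast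
  show ?thesis using stepf_props[OF g IH] B by (blast intro: post_int)
qed

lemma good_add:
  assumes "good g1" "good g2"
  shows "good (\<lambda>s a t hs fl. g1 s a t hs fl + g2 s a t hs fl)"
  unfolding good_def
proof (intro conjI allI)
  fix s a hs fl
  show "(\<lambda>\<theta>. g1 s a \<theta> hs fl + g2 s a \<theta> hs fl) \<in> borel_measurable F"
    using assms unfolding good_def by (intro borel_measurable_add) blast+
next
  fix s hs fl
  obtain B1 where "\<forall>a. \<forall>\<theta>\<in>\<Theta>. \<bar>g1 s a \<theta> hs fl\<bar> \<le> B1" using assms(1) unfolding good_def by blast
  moreover obtain B2 where "\<forall>a. \<forall>\<theta>\<in>\<Theta>. \<bar>g2 s a \<theta> hs fl\<bar> \<le> B2" using assms(2) unfolding good_def by blast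
  ultimately show "\<exists>B. \<forall>a. \<forall>\<theta>\<in>\<Theta>. \<bar>g1 s a \<theta> hs fl + g2 s a \<theta> hs fl\<bar> \<le> B"
    by (intro exI[of _ "B1 + B2"]) (smt (verit))
qed

lemma good_scale:
  assumes "good g"
  shows "good (\<lambda>s a t hs fl. c * g s a t hs fl)"
  unfolding good_def
proof (intro conjI allI)
  fix s a hs fl
  show "(\<lambda>\<theta>. c * g s a \<theta> hs fl) \<in> borel_measurable F"
    using assms unfolding good_def by (intro borel_measurable_times borel_measurable_const) blast+
next
  fix s hs fl
  obtain B where B: "\<forall>a. \<forall>\<theta>\<in>\<Theta>. \<bar>g s a \<theta> hs fl\<bar> \<le> B" using assms(1) unfolding good_def by blast
  show "\<exists>B. \<forall>a. \<forall>\<theta>\<in>\<Theta>. \<bar>c * g s a \<theta> hs fl\<bar> \<le> B"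
    by (intro exI[of _ "\<bar>c\<bar> * B"]) (use B in \<open>auto simp: abs_mult intro: mult_left_mono\<close>)
qed

lemma ep_add:
  assumes g1: "good g1" and g2: "good g2"
  shows "E (\<lambda>s a t hs fl. g1 s a t hs fl + g2 s a t hs fl) n s hs th = E g1 n s hs th + E g2 n s hs th"
proof (induction n arbitrary: s hs th)
  case 0 thus ?case by simp
next
  case (Suc n)
  have st: "stepf (\<lambda>s a t hs fl. g1 s a t hs fl + g2 s a t hs fl) n s hs \<theta> fl = stepf g1 n s hs \<theta> fl + stepf g2 n s hs \<theta> fl" for \<theta> fl
    by (simp add: stepf_def Let_def Suc.IH distrib_left sum.distrib algebra_simps)
  show ?case unfolding E_Suc st
    using stepf_int[OF g1] stepf_int[OF g2] by (simp add: integral_add)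
qed

lemma ep_scale:
  shows "E (\<lambda>s a t hs fl. c * g s a t hs fl) n s hs th = c * E g n s hs th"
proof (induction n arbitrary: s hs th)
  case 0 thus ?case by simp
next
  case (Suc n)
  have st: "stepf (\<lambda>s a t hs fl. c * g s a t hs fl) n s hs \<theta> fl = c * stepf g n s hs \<theta> fl" for \<theta> fl
    by (simp add: stepf_def Let_def Suc.IH distrib_left sum_distrib_left algebra_simps)
  show ?case unfolding E_Suc st by simp
qed

lemma es_add:
  assumes "good g1" "good g2"
  shows "expect_sum \<eta> h \<theta>s F newep pol (\<lambda>s a t hs fl. g1 s a t hs fl + g2 s a t hs fl) T
       = expect_sum \<eta> h \<theta>s F newep pol g1 T + expect_sum \<eta> h \<theta>s F newep pol g2 T"
  unfolding expect_sum_def ep_add[OF assms] by (simp add: distrib_left sum.distrib)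

lemma es_scale:
  shows "expect_sum \<eta> h \<theta>s F newep pol (\<lambda>s a t hs fl. c * g s a t hs fl) T
       = c * expect_sum \<eta> h \<theta>s F newep pol g T"
  unfolding expect_sum_def ep_scale by (simp add: sum_distrib_left algebra_simps)


definition gc where
  "gc = (\<lambda>s a t hs fl. (C s a - J \<theta>s) + ((- H) * (if fl then 1 else 0) + ((- 1) * (J t - J \<theta>s) +
      ((- H) * ((\<Sum>s'\<in>UNIV. \<bar>\<theta>s s a s' - t s a s'\<bar>) + (\<Sum>s''\<in>UNIV. \<bar>belief \<eta> h \<theta>s hs s'' - belief \<eta> h t hs s''\<bar>))
       + (- 1) * (cbar C (belief \<eta> h \<theta>s hs) a - cbar C (belief \<eta> h t hs) a)))))"

lemma gc_avg:
  assumes th: "\<theta>' \<in> \<Theta>"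
  shows "(\<Sum>s\<in>UNIV. belief \<eta> h \<theta>s hs s * gc s a \<theta>' hs fl) =
     cbar C (belief \<eta> h \<theta>' hs) a - J \<theta>' - (if fl then H else 0)
     - H * ((\<Sum>s\<in>UNIV. belief \<eta> h \<theta>s hs s * (\<Sum>s'\<in>UNIV. \<bar>\<theta>s s a s' - \<theta>' s a s'\<bar>))
            + (\<Sum>s\<in>UNIV. \<bar>belief \<eta> h \<theta>s hs s - belief \<eta> h \<theta>' hs s\<bar>))"
proof -
  define b where "b = belief \<eta> h \<theta>s hs"
  define bk where "bk = belief \<eta> h \<theta>' hs"
  define X where "X s = (\<Sum>s'\<in>UNIV. \<bar>\<theta>s s a s' - \<theta>' s a s'\<bar>)" for s
  define K where "K = - J \<theta>s - (if fl then H else 0) - (J \<theta>' - J \<theta>s) - H * (\<Sum>s\<in>UNIV. \<bar>b s - bk s\<bar>)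
     - (cbar C b a - cbar C bk a)"
  have bD: "b \<in> Dist" using bel_Dist[OF true_param] b_def by simp
  have e: "gc s a \<theta>' hs fl = C s a + (- H) * X s + K" for s
    by (simp add: gc_def X_def K_def b_def bk_def algebra_simps)
  have "(\<Sum>s\<in>UNIV. b s * gc s a \<theta>' hs fl) = (\<Sum>s\<in>UNIV. b s * C s a + (- H) * (b s * X s) + K * b s)"
    by (simp add: e algebra_simps)
  also have "\<dots> = (\<Sum>s\<in>UNIV. b s * C s a) + (- H) * (\<Sum>s\<in>UNIV. b s * X s) + K * (\<Sum>s\<in>UNIV. b s)"
    by (simp only: sum.distrib sum_distrib_left)
  also have "(\<Sum>s\<in>UNIV. b s * C s a) = cbar C b a" by (simp add: cbar_def mult.commute)
  finally show ?thesis using bD unfolding b_def[symmetric] bk_def[symmetric] X_def[symmetric]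
    by (simp add: Dist_sum K_def algebra_simps)
qed

lemma key:
  assumes th: "\<theta>' \<in> \<Theta>"
    and IH: "\<And>ob. (\<Sum>s'\<in>UNIV. belief \<eta> h \<theta>s (fst hs, snd hs @ [(pol \<theta>' (belief \<eta> h \<theta>' hs), ob)]) s' *
                E gc n s' (fst hs, snd hs @ [(pol \<theta>' (belief \<eta> h \<theta>' hs), ob)]) \<theta>')
             \<le> v \<theta>' (belief \<eta> h \<theta>' (fst hs, snd hs @ [(pol \<theta>' (belief \<eta> h \<theta>' hs), ob)]))"
  shows "(\<Sum>s\<in>UNIV. belief \<eta> h \<theta>s hs s * stepf gc n s hs \<theta>' fl) \<le> v \<theta>' (belief \<eta> h \<theta>' hs) - (if fl then H else 0)"
proof -
  define b where "b = belief \<eta> h \<theta>s hs"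
  define bk where "bk = belief \<eta> h \<theta>' hs"
  define a where "a = pol \<theta>' bk"
  define En where "En s' ob = E gc n s' (fst hs, snd hs @ [(a, ob)]) \<theta>'" for s' ob
  have bD: "b \<in> Dist" using bel_Dist[OF true_param] b_def by simp
  have bkD: "bk \<in> Dist" using bel_Dist[OF th] bk_def by simp
  have ks: "is_kernel \<theta>s" by (rule kern[OF true_param])
  have kk: "is_kernel \<theta>'" by (rule kern[OF th])
  have bel1: "belief \<eta> h \<theta>s (fst hs, snd hs @ [(a, ob)]) = tau \<eta> \<theta>s b a ob" for ob
    using belief_snoc[of \<eta> h \<theta>s "fst hs" "snd hs" a ob] by (simp add: b_def)
  have bel2: "belief \<eta> h \<theta>' (fst hs, snd hs @ [(a, ob)]) = tau \<eta> \<theta>' bk a ob" for ob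
    using belief_snoc[of \<eta> h \<theta>' "fst hs" "snd hs" a ob] by (simp add: bk_def)
  have IH': "(\<Sum>s'\<in>UNIV. tau \<eta> \<theta>s b a ob s' * En s' ob) \<le> v \<theta>' (tau \<eta> \<theta>' bk a ob)" for ob
    using IH[of ob] unfolding bk_def[symmetric] a_def[symmetric] bel1 bel2 En_def .
  have split: "(\<Sum>s\<in>UNIV. b s * stepf gc n s hs \<theta>' fl) = (\<Sum>s\<in>UNIV. b s * gc s a \<theta>' hs fl)
      + (\<Sum>s\<in>UNIV. b s * (\<Sum>s'\<in>UNIV. \<theta>s s a s' * (\<Sum>ob\<in>UNIV. \<eta> s' ob * En s' ob)))"
    by (simp add: stepf_def Let_def bk_def[symmetric] a_def[symmetric] En_def distrib_left sum.distrib)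
  have "(\<Sum>s\<in>UNIV. b s * (\<Sum>s'\<in>UNIV. \<theta>s s a s' * (\<Sum>ob\<in>UNIV. \<eta> s' ob * En s' ob)))
      = (\<Sum>s\<in>UNIV. \<Sum>s'\<in>UNIV. \<Sum>ob\<in>UNIV. b s * \<theta>s s a s' * \<eta> s' ob * En s' ob)"
    by (simp add: sum_distrib_left mult.assoc)
  also have "\<dots> = (\<Sum>s'\<in>UNIV. \<Sum>s\<in>UNIV. \<Sum>ob\<in>UNIV. b s * \<theta>s s a s' * \<eta> s' ob * En s' ob)"
    by (rule sum.swap)
  also have "\<dots> = (\<Sum>s'\<in>UNIV. \<Sum>ob\<in>UNIV. \<Sum>s\<in>UNIV. b s * \<theta>s s a s' * \<eta> s' ob * En s' ob)"
    by (rule sum.cong[OF refl], rule sum.swap)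
  also have "\<dots> = (\<Sum>ob\<in>UNIV. \<Sum>s'\<in>UNIV. \<Sum>s\<in>UNIV. b s * \<theta>s s a s' * \<eta> s' ob * En s' ob)"
    by (rule sum.swap)
  also have "\<dots> = (\<Sum>ob\<in>UNIV. \<Sum>s'\<in>UNIV. (\<Sum>s\<in>UNIV. b s * \<theta>s s a s' * \<eta> s' ob) * En s' ob)"
    by (simp add: sum_distrib_right)
  also have "\<dots> = (\<Sum>ob\<in>UNIV. Pobs \<eta> \<theta>s b a ob * (\<Sum>s'\<in>UNIV. tau \<eta> \<theta>s b a ob s' * En s' ob))"
    by (simp only: weight[OF eta ks bD]) (simp add: sum_distrib_left mult.assoc)
  also have "\<dots> \<le> (\<Sum>ob\<in>UNIV. Pobs \<eta> \<theta>s b a ob * v \<theta>' (tau \<eta> \<theta>' bk a ob))"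
    by (intro sum_mono mult_left_mono IH' Pobs_nonneg[OF eta ks bD])
  finally have A2: "(\<Sum>s\<in>UNIV. b s * (\<Sum>s'\<in>UNIV. \<theta>s s a s' * (\<Sum>ob\<in>UNIV. \<eta> s' ob * En s' ob)))
      \<le> (\<Sum>ob\<in>UNIV. Pobs \<eta> \<theta>s b a ob * v \<theta>' (tau \<eta> \<theta>' bk a ob))" .
  have A1: "(\<Sum>s\<in>UNIV. b s * gc s a \<theta>' hs fl) = cbar C bk a - J \<theta>' - (if fl then H else 0)
     - H * ((\<Sum>s\<in>UNIV. b s * (\<Sum>s'\<in>UNIV. \<bar>\<theta>s s a s' - \<theta>' s a s'\<bar>)) + (\<Sum>s\<in>UNIV. \<bar>b s - bk s\<bar>))"
    using gc_avg[OF th] unfolding b_def bk_def by simp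
  have Bell: "J \<theta>' + v \<theta>' bk = cbar C bk a + (\<Sum>ob\<in>UNIV. Pobs \<eta> \<theta>' bk a ob * v \<theta>' (tau \<eta> \<theta>' bk a ob))"
    using bellman[OF th bkD] a_def by simp
  have Vb: "\<forall>ob. 0 \<le> v \<theta>' (tau \<eta> \<theta>' bk a ob) \<and> v \<theta>' (tau \<eta> \<theta>' bk a ob) \<le> H"
    using v_bounds[OF th tau_Dist[OF eta kk bkD]] by blast
  have L: "(\<Sum>ob\<in>UNIV. (Pobs \<eta> \<theta>s b a ob - Pobs \<eta> \<theta>' bk a ob) * v \<theta>' (tau \<eta> \<theta>' bk a ob))
     \<le> H * ((\<Sum>s\<in>UNIV. b s * (\<Sum>s'\<in>UNIV. \<bar>\<theta>s s a s' - \<theta>' s a s'\<bar>)) + (\<Sum>s\<in>UNIV. \<bar>b s - bk s\<bar>))"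
    by (rule L7[OF eta kk bD Vb])
  have D: "(\<Sum>ob\<in>UNIV. (Pobs \<eta> \<theta>s b a ob - Pobs \<eta> \<theta>' bk a ob) * v \<theta>' (tau \<eta> \<theta>' bk a ob))
     = (\<Sum>ob\<in>UNIV. Pobs \<eta> \<theta>s b a ob * v \<theta>' (tau \<eta> \<theta>' bk a ob)) - (\<Sum>ob\<in>UNIV. Pobs \<eta> \<theta>' bk a ob * v \<theta>' (tau \<eta> \<theta>' bk a ob))"
    by (simp add: left_diff_distrib sum_subtractf)
  show ?thesis unfolding b_def[symmetric] bk_def[symmetric] split
    using A1 A2 Bell L D by linarith
qed

end

context pm begin

lemma goodI:
  assumes "\<And>s a hs fl. (\<lambda>\<theta>. g s a \<theta> hs fl) \<in> borel_measurable F"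
    and "\<And>s a hs fl \<theta>. \<theta> \<in> \<Theta> \<Longrightarrow> \<bar>g s a \<theta> hs fl\<bar> \<le> B"
  shows "good g"
  unfolding good_def using assms by blast

lemma absdiff01: "0 \<le> x \<and> x \<le> 1 \<Longrightarrow> 0 \<le> y \<and> y \<le> (1::real) \<Longrightarrow> \<bar>x - y\<bar> \<le> 1"
  by (simp add: abs_le_iff)

lemma sum_abs_bound:
  fixes f :: "'b::finite \<Rightarrow> real"
  assumes "\<And>i. \<bar>f i\<bar> \<le> 1"
  shows "\<bar>\<Sum>i\<in>UNIV. \<bar>f i\<bar>\<bar> \<le> real CARD('b)"
proof -
  have "(\<Sum>i\<in>UNIV. \<bar>f i\<bar>) \<le> of_nat (card (UNIV::'b set)) * 1"
    by (rule sum_bounded_above) (use assms in auto)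
  moreover have "0 \<le> (\<Sum>i\<in>UNIV. \<bar>f i\<bar>)" by (rule sum_nonneg) auto
  ultimately show ?thesis by simp
qed

lemma good_L: "good (\<lambda>s a t hs fl. C s a - J \<theta>s)"
proof (rule goodI[where B="1 + \<bar>J \<theta>s\<bar>"])
  fix s a hs fl \<theta>
  show "\<bar>C s a - J \<theta>s\<bar> \<le> 1 + \<bar>J \<theta>s\<bar>" using cost[rule_format, of s a] by (smt (verit))
qed measurable

lemma good_1: "good (\<lambda>s a t hs fl. if fl then 1 else 0)"
  by (rule goodI[where B=1]) auto

lemma good_2: "good (\<lambda>s a t hs fl. J t - J \<theta>s)"
proof (rule goodI[where B="1 + 2 * H + \<bar>J \<theta>s\<bar>"])
  fix s a hs fl \<theta> assume "\<theta> \<in> \<Theta>"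
  thus "\<bar>J \<theta> - J \<theta>s\<bar> \<le> 1 + 2 * H + \<bar>J \<theta>s\<bar>" using J_bound[of \<theta>] by (smt (verit))
qed measurable

lemma good_3: "good (\<lambda>s a t hs fl. (\<Sum>s'\<in>UNIV. \<bar>\<theta>s s a s' - t s a s'\<bar>) + (\<Sum>s''\<in>UNIV. \<bar>belief \<eta> h \<theta>s hs s'' - belief \<eta> h t hs s''\<bar>))"
proof (rule goodI[where B="2 * real CARD('s)"])
  fix s a hs fl \<theta> assume th: "\<theta> \<in> \<Theta>"
  have 1: "\<bar>\<Sum>s'\<in>UNIV. \<bar>\<theta>s s a s' - \<theta> s a s'\<bar>\<bar> \<le> real CARD('s)"
    by (rule sum_abs_bound) (intro absdiff01 ker01 th true_param)
  have 2: "\<bar>\<Sum>s''\<in>UNIV. \<bar>belief \<eta> h \<theta>s hs s'' - belief \<eta> h \<theta> hs s''\<bar>\<bar> \<le> real CARD('s)"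
    by (rule sum_abs_bound) (intro absdiff01 bel01 th true_param)
  show "\<bar>(\<Sum>s'\<in>UNIV. \<bar>\<theta>s s a s' - \<theta> s a s'\<bar>) + (\<Sum>s''\<in>UNIV. \<bar>belief \<eta> h \<theta>s hs s'' - belief \<eta> h \<theta> hs s''\<bar>)\<bar> \<le> 2 * real CARD('s)"
    using 1 2 by linarith
qed measurable

lemma good_4: "good (\<lambda>s a t hs fl. cbar C (belief \<eta> h \<theta>s hs) a - cbar C (belief \<eta> h t hs) a)"
proof (rule goodI[where B=1])
  fix s a hs fl \<theta> assume th: "\<theta> \<in> \<Theta>"
  show "\<bar>cbar C (belief \<eta> h \<theta>s hs) a - cbar C (belief \<eta> h \<theta> hs) a\<bar> \<le> 1"
    by (intro absdiff01 cbar_bounds bel_Dist th true_param)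
next
  fix s a hs fl
  show "(\<lambda>\<theta>. cbar C (belief \<eta> h \<theta>s hs) a - cbar C (belief \<eta> h \<theta> hs) a) \<in> borel_measurable F"
    unfolding cbar_def by measurable
qed

lemma good_gc: "good gc"
  unfolding gc_def
  by (intro good_add good_scale good_L good_1 good_2 good_3 good_4)

lemma claim:
  "(snd hs = [] \<or> newep hs) \<or> th \<in> \<Theta> \<Longrightarrow>
   (\<Sum>s\<in>UNIV. belief \<eta> h \<theta>s hs s * E gc n s hs th) \<le> (if snd hs = [] \<or> newep hs then 0 else v th (belief \<eta> h th hs))"
proof (induction n arbitrary: hs th)
  case 0
  have "th \<in> \<Theta> \<Longrightarrow> 0 \<le> v th (belief \<eta> h th hs)" using v_bounds bel_Dist by blast
  then show ?case using 0 by auto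
next
  case (Suc n)
  have IH': "(\<Sum>s\<in>UNIV. belief \<eta> h \<theta>s hs' s * E gc n s hs' \<theta>') \<le> v \<theta>' (belief \<eta> h \<theta>' hs')"
    if th': "\<theta>' \<in> \<Theta>" for hs' \<theta>'
  proof -
    have "0 \<le> v \<theta>' (belief \<eta> h \<theta>' hs')" using v_bounds[OF th' bel_Dist[OF th']] by simp
    thus ?thesis using Suc.IH[of hs' \<theta>'] th' by (auto split: if_splits)
  qed
  have K: "(\<Sum>s\<in>UNIV. belief \<eta> h \<theta>s hs s * stepf gc n s hs \<theta>' fl) \<le> v \<theta>' (belief \<eta> h \<theta>' hs) - (if fl then H else 0)"
    if th': "\<theta>' \<in> \<Theta>" for \<theta>' fl
    by (rule key[OF th' IH'[OF th']])
  show ?case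
  proof (cases "snd hs = [] \<or> newep hs")
    case True
    let ?M = "posterior F \<eta> h hs"
    have int: "integrable ?M (\<lambda>\<theta>'. belief \<eta> h \<theta>s hs s * stepf gc n s hs \<theta>' True)" for s
      using stepf_int[OF good_gc] by auto
    have "(\<Sum>s\<in>UNIV. belief \<eta> h \<theta>s hs s * E gc (Suc n) s hs th)
        = (\<Sum>s\<in>UNIV. belief \<eta> h \<theta>s hs s * (\<integral>\<theta>'. stepf gc n s hs \<theta>' True \<partial>?M))"
      using True by (simp only: E_Suc if_True)
    also have "\<dots> = (\<integral>\<theta>'. (\<Sum>s\<in>UNIV. belief \<eta> h \<theta>s hs s * stepf gc n s hs \<theta>' True) \<partial>?M)"
    proof -
      have "(\<integral>\<theta>'. (\<Sum>s\<in>UNIV. belief \<eta> h \<theta>s hs s * stepf gc n s hs \<theta>' True) \<partial>?M)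
          = (\<Sum>s\<in>UNIV. (\<integral>\<theta>'. belief \<eta> h \<theta>s hs s * stepf gc n s hs \<theta>' True \<partial>?M))"
        by (rule Bochner_Integration.integral_sum[where f="\<lambda>s \<theta>'. belief \<eta> h \<theta>s hs s * stepf gc n s hs \<theta>' True"]) (rule int)
      thus ?thesis by simp
    qed
    also have "\<dots> \<le> 0"
    proof -
      have "0 \<le> (\<integral>\<theta>'. - (\<Sum>s\<in>UNIV. belief \<eta> h \<theta>s hs s * stepf gc n s hs \<theta>' True) \<partial>?M)"
      proof (rule integral_nonneg_AE, rule AE_I2)
        fix \<theta>' assume "\<theta>' \<in> space ?M"
        hence th': "\<theta>' \<in> \<Theta>" using post_space by simp
        have "v \<theta>' (belief \<eta> h \<theta>' hs) \<le> H" using v_bounds[OF th' bel_Dist[OF th']] by simp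
        thus "0 \<le> - (\<Sum>s\<in>UNIV. belief \<eta> h \<theta>s hs s * stepf gc n s hs \<theta>' True)"
          using K[OF th', of True] by simp
      qed
      thus ?thesis by simp
    qed
    finally show ?thesis using True by simp
  next
    case False
    then have th: "th \<in> \<Theta>" using Suc.prems by auto
    have "(\<Sum>s\<in>UNIV. belief \<eta> h \<theta>s hs s * E gc (Suc n) s hs th)
        = (\<Sum>s\<in>UNIV. belief \<eta> h \<theta>s hs s * stepf gc n s hs th False)"
      using False by (simp only: E_Suc if_False)
    then show ?thesis using K[OF th, of False] False by simp
  qed
qed

lemma es_nonpos: "expect_sum \<eta> h \<theta>s F newep pol gc T \<le> 0"
proof -
  define Ev where "Ev s ob = E gc T s (ob, []) undefined" for s ob
  have "expect_sum \<eta> h \<theta>s F newep pol gc T = (\<Sum>s\<in>UNIV. \<Sum>ob\<in>UNIV. (h \<theta>s s * \<eta> s ob) * Ev s ob)"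
    unfolding expect_sum_def Ev_def by (simp add: sum_distrib_left mult.assoc)
  also have "\<dots> = (\<Sum>ob\<in>UNIV. \<Sum>s\<in>UNIV. (h \<theta>s s * \<eta> s ob) * Ev s ob)"
    by (rule sum.swap)
  also have "\<dots> \<le> 0"
  proof (rule sum_nonpos)
    fix ob
    define Z where "Z = (\<Sum>s\<in>UNIV. \<eta> s ob * h \<theta>s s)"
    have hD: "h \<theta>s \<in> Dist" using init true_param by auto
    have nn: "0 \<le> \<eta> s ob * h \<theta>s s" for s using eta01 Dist_nonneg[OF hD] by simp
    show "(\<Sum>s\<in>UNIV. (h \<theta>s s * \<eta> s ob) * Ev s ob) \<le> 0"
    proof (cases "Z = 0")
      case True
      hence z: "h \<theta>s s * \<eta> s ob = 0" for s using nn unfolding Z_def by (simp add: sum_nonneg_eq_0_iff mult.commute)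
      show ?thesis by (simp only: z) simp
    next
      case False
      have Z0: "0 \<le> Z" unfolding Z_def by (rule sum_nonneg) (use nn in auto)
      have ib: "belief \<eta> h \<theta>s (ob, []) s = \<eta> s ob * h \<theta>s s / Z" for s
        using False by (simp add: belief_def init_belief_def Let_def Z_def)
      have "(\<Sum>s\<in>UNIV. (h \<theta>s s * \<eta> s ob) * Ev s ob) = Z * (\<Sum>s\<in>UNIV. belief \<eta> h \<theta>s (ob, []) s * Ev s ob)"
        using False by (simp add: ib sum_distrib_left mult.commute mult.left_commute)
      also have "\<dots> \<le> 0"
        using claim[of "(ob, [])" undefined T] Z0 unfolding Ev_def
        by (simp add: mult_nonneg_nonpos)
      finally show ?thesis .
    qed
  qed
  finally show ?thesis .
qed


lemma es_gc: "expect_sum \<eta> h \<theta>s F newep pol gc T =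
   expect_sum \<eta> h \<theta>s F newep pol (\<lambda>s a t hs fl. C s a - J \<theta>s) T +
   ((- H) * expect_sum \<eta> h \<theta>s F newep pol (\<lambda>s a t hs fl. if fl then 1 else 0) T +
   ((- 1) * expect_sum \<eta> h \<theta>s F newep pol (\<lambda>s a t hs fl. J t - J \<theta>s) T +
   ((- H) * expect_sum \<eta> h \<theta>s F newep pol (\<lambda>s a t hs fl. (\<Sum>s'\<in>UNIV. \<bar>\<theta>s s a s' - t s a s'\<bar>) + (\<Sum>s''\<in>UNIV. \<bar>belief \<eta> h \<theta>s hs s'' - belief \<eta> h t hs s''\<bar>)) T +
   (- 1) * expect_sum \<eta> h \<theta>s F newep pol (\<lambda>s a t hs fl. cbar C (belief \<eta> h \<theta>s hs) a - cbar C (belief \<eta> h t hs) a) T)))"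
  by (simp only: gc_def es_add es_scale good_add good_scale good_L good_1 good_2 good_3 good_4)

end

theorem lemma2:
  fixes \<eta> :: "'s::finite \<Rightarrow> 'o::finite \<Rightarrow> real"
    and C :: "'s \<Rightarrow> 'a::finite \<Rightarrow> real"
    and h :: "('s, 'a) kern \<Rightarrow> 's \<Rightarrow> real"
    and H :: real
    and \<Theta> :: "('s, 'a) kern set"
    and F :: "('s, 'a) kern measure"
    and \<theta>s :: "('s, 'a) kern"
    and J :: "('s, 'a) kern \<Rightarrow> real"
    and v :: "('s, 'a) kern \<Rightarrow> ('s \<Rightarrow> real) \<Rightarrow> real"
    and pol :: "('s, 'a) kern \<Rightarrow> ('s \<Rightarrow> real) \<Rightarrow> 'a"
    and newep :: "('a, 'o) hist \<Rightarrow> bool"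
    and T :: nat
  assumes eta: "\<forall>s. \<eta> s \<in> Dist"
    and cost: "\<forall>s a. 0 \<le> C s a \<and> C s a \<le> 1"
    and init: "\<forall>\<theta>\<in>\<Theta>. h \<theta> \<in> Dist"
    and Theta: "\<Theta> \<subseteq> Theta_H \<eta> C H"
    and sol: "\<forall>\<theta>\<in>\<Theta>. acoe_sol \<eta> C H \<theta> (J \<theta>) (v \<theta>)"
    and pol_min: "\<forall>\<theta>\<in>\<Theta>. \<forall>b\<in>Dist.
                    bellman_rhs \<eta> C \<theta> (v \<theta>) b (pol \<theta> b) = Min (range (bellman_rhs \<eta> C \<theta> (v \<theta>) b))"
    and prior: "prob_space F" "space F = \<Theta>"
    and meas_kernel: "\<forall>s a s'. (\<lambda>\<theta>. \<theta> s a s') \<in> borel_measurable F"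
    and meas_init: "\<forall>s. (\<lambda>\<theta>. h \<theta> s) \<in> borel_measurable F"
    and meas_J: "J \<in> borel_measurable F"
    and meas_pol: "\<forall>hs. (\<lambda>\<theta>. pol \<theta> (belief \<eta> h \<theta> hs)) \<in> measurable F (count_space UNIV)"
    and true_param: "\<theta>s \<in> \<Theta>"
  shows
   "expect_sum \<eta> h \<theta>s F newep pol (\<lambda>s a \<theta>k hs fl. C s a - J \<theta>s) T
    \<le> H * expect_sum \<eta> h \<theta>s F newep pol (\<lambda>s a \<theta>k hs fl. if fl then 1 else 0) T
      + expect_sum \<eta> h \<theta>s F newep pol (\<lambda>s a \<theta>k hs fl. J \<theta>k - J \<theta>s) T
      + H * expect_sum \<eta> h \<theta>s F newep pol
              (\<lambda>s a \<theta>k hs fl. (\<Sum>s'\<in>UNIV. \<bar>\<theta>s s a s' - \<theta>k s a s'\<bar>)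
                 + (\<Sum>s''\<in>UNIV. \<bar>belief \<eta> h \<theta>s hs s'' - belief \<eta> h \<theta>k hs s''\<bar>)) T
      + expect_sum \<eta> h \<theta>s F newep pol
              (\<lambda>s a \<theta>k hs fl. cbar C (belief \<eta> h \<theta>s hs) a - cbar C (belief \<eta> h \<theta>k hs) a) T"
  
proof -
  interpret pm \<eta> C h H \<Theta> F \<theta>s J v pol newep
    by (rule pm.intro) (fact eta cost init Theta sol pol_min prior meas_kernel meas_init meas_J meas_pol true_param)+
  show ?thesis using es_gc[of T] es_nonpos[of T] by linarith
qed

end
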